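(* Let $F:\mathcal{P}(V,A)\to 2^A\setminus\{\emptyset\}$ be a committee selection rule satisfying SPO and SPP. Let $P$ be a profile, $i$ a voter, $W=F(P)$, $t=\mathrm{best}(P_i,W)$, $b=\mathrm{worst}(P_i,W)$, and suppose $t\neq b$. Let $s\in A$ with $s\neq t,b$ and let $W'=F(P^{i\uparrow s})$. Then (1) $\mathrm{best}(P_i^{\uparrow s},W')\in\{t,s\}$, and (2) $\mathrm{worst}(P_i^{\uparrow s},W')\in\{b,s\}$.
   Context: $V$ is a finite nonempty set of voters, $A$ a finite set of alternatives; a profile $P$ assigns to each voter $i$ a linear order $P_i$ on $A$ (strict part $\succ_i$, weak part $\succeq_i$); $P_i'P_{-i}$ replaces voter $i$'s order by $P_i'$. A committee selection rule maps each profile to a nonempty subset of $A$. $\mathrm{best}(P_i,W)$, $\mathrm{worst}(P_i,W)$ are the $P_i$-best and $P_i$-worst elements of nonempty $W\subseteq A$. SPO: for all $P$, $i$, $P_i'$, $\mathrm{best}(P_i,F(P))\succeq_i\mathrm{best}(P_i,F(P_i'P_{-i}))$; SPP: same with $\mathrm{worst}$. $P_i^{\uparrow s}$ is the linear order obtained from $P_i$ by swapping $s$ with the alternative directly above it, and $P^{i\uparrow s}$ is the profile obtained from $P$ by replacing $P_i$ with $P_i^{\uparrow s}$. *)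

theory Defs
  imports Main
begin

text \<open>A linear order on the finite set A of alternatives is represented as a ranking list:
  a list without repetitions whose set of elements is A; earlier positions are better.\<close>

definition lin_order :: "'a set \<Rightarrow> 'a list \<Rightarrow> bool" where
  "lin_order A xs \<longleftrightarrow> distinct xs \<and> set xs = A"

definition pos :: "'a list \<Rightarrow> 'a \<Rightarrow> nat" where
  "pos xs x = (LEAST k. k < length xs \<and> xs ! k = x)"

definition weak_pref :: "'a list \<Rightarrow> 'a \<Rightarrow> 'a \<Rightarrow> bool" where
  "weak_pref xs x y \<longleftrightarrow> pos xs x \<le> pos xs y"

definition profile :: "'v set \<Rightarrow> 'a set \<Rightarrow> ('v \<Rightarrow> 'a list) \<Rightarrow> bool" where
  "profile V A P \<longleftrightarrow> (\<forall>i\<in>V. lin_order A (P i))"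

definition committee_rule :: "'v set \<Rightarrow> 'a set \<Rightarrow> (('v \<Rightarrow> 'a list) \<Rightarrow> 'a set) \<Rightarrow> bool" where
  "committee_rule V A F \<longleftrightarrow> (\<forall>P. profile V A P \<longrightarrow> F P \<noteq> {} \<and> F P \<subseteq> A)"

definition best :: "'a list \<Rightarrow> 'a set \<Rightarrow> 'a" where
  "best xs W = hd (filter (\<lambda>x. x \<in> W) xs)"

definition worst :: "'a list \<Rightarrow> 'a set \<Rightarrow> 'a" where
  "worst xs W = last (filter (\<lambda>x. x \<in> W) xs)"

definition SPO :: "'v set \<Rightarrow> 'a set \<Rightarrow> (('v \<Rightarrow> 'a list) \<Rightarrow> 'a set) \<Rightarrow> bool" where
  "SPO V A F \<longleftrightarrow> (\<forall>P i P'. profile V A P \<longrightarrow> i \<in> V \<longrightarrow> lin_order A P' \<longrightarrow>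
      weak_pref (P i) (best (P i) (F P)) (best (P i) (F (P(i := P')))))"

definition SPP :: "'v set \<Rightarrow> 'a set \<Rightarrow> (('v \<Rightarrow> 'a list) \<Rightarrow> 'a set) \<Rightarrow> bool" where
  "SPP V A F \<longleftrightarrow> (\<forall>P i P'. profile V A P \<longrightarrow> i \<in> V \<longrightarrow> lin_order A P' \<longrightarrow>
      weak_pref (P i) (worst (P i) (F P)) (worst (P i) (F (P(i := P')))))"

definition swap_up :: "'a list \<Rightarrow> 'a \<Rightarrow> 'a list" where
  "swap_up xs s = (let k = pos xs s in
     if 0 < k \<and> k < length xs then xs[k - 1 := s, k := xs ! (k - 1)] else xs)"

end

theory Submission
  imports Defs
begin

lemma pos_Cons: "y \<in> set (x#xs) \<Longrightarrow> pos (x#xs) y = (if y = x then 0 else Suc (pos xs y))"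
proof (cases "y = x")
  case True then show ?thesis unfolding pos_def by (intro Least_equality) auto
next
  case False
  assume y: "y \<in> set (x#xs)"
  then obtain j where j: "j < length (x#xs)" "(x#xs)!j = y" by (metis in_set_conv_nth)
  have "(LEAST k. k < length (x#xs) \<and> (x#xs)!k = y) = Suc (LEAST m. Suc m < length (x#xs) \<and> (x#xs)!(Suc m) = y)"
    by (rule Least_Suc[where P="\<lambda>k. k < length (x#xs) \<and> (x#xs)!k = y" and n=j]) (use False j in auto)
  then show ?thesis using False unfolding pos_def by simp
qed

lemma pos_in: "x \<in> set xs \<Longrightarrow> pos xs x < length xs \<and> xs ! (pos xs x) = x"
proof -
  assume "x \<in> set xs"
  then obtain j where "j < length xs" "xs!j = x" by (metis in_set_conv_nth)
  then show ?thesis unfolding pos_def by (metis (mono_tags, lifting) LeastI)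
qed

lemma pos_nth: "distinct xs \<Longrightarrow> j < length xs \<Longrightarrow> pos xs (xs!j) = j"
  unfolding pos_def by (rule Least_equality) (auto simp: nth_eq_iff_index_eq)

lemma pos_inj: "x \<in> set xs \<Longrightarrow> y \<in> set xs \<Longrightarrow> pos xs x = pos xs y \<Longrightarrow> x = y"
  by (metis pos_in)

lemma best_prop: "distinct xs \<Longrightarrow> w \<in> set xs \<Longrightarrow> w \<in> W \<Longrightarrow>
   best xs W \<in> W \<and> best xs W \<in> set xs \<and> pos xs (best xs W) \<le> pos xs w"
proof (induction xs)
  case Nil then show ?case by simp
next
  case (Cons x xs)
  show ?case
  proof (cases "x \<in> W")
    case True then show ?thesis by (simp add: best_def pos_Cons)
  next
    case False
    then have b: "best (x#xs) W = best xs W" by (simp add: best_def)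
    have w: "w \<in> set xs" "w \<noteq> x" using Cons.prems False by auto
    with Cons have IH: "best xs W \<in> W \<and> best xs W \<in> set xs \<and> pos xs (best xs W) \<le> pos xs w" by auto
    then have "best xs W \<noteq> x" using False by auto
    then show ?thesis using IH w b by (simp add: pos_Cons)
  qed
qed

lemma worst_prop: "distinct xs \<Longrightarrow> w \<in> set xs \<Longrightarrow> w \<in> W \<Longrightarrow>
   worst xs W \<in> W \<and> worst xs W \<in> set xs \<and> pos xs w \<le> pos xs (worst xs W)"
proof (induction xs arbitrary: w)
  case Nil then show ?case by simp
next
  case (Cons x xs)
  show ?case
  proof (cases "\<exists>y\<in>set xs. y \<in> W")
    case True
    then obtain y where y: "y \<in> set xs" "y \<in> W" by auto
    then have ne: "filter (\<lambda>x. x \<in> W) xs \<noteq> []" by (simp add: filter_empty_conv) blast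
    then have b: "worst (x#xs) W = worst xs W" by (simp add: worst_def)
    have IHy: "worst xs W \<in> W \<and> worst xs W \<in> set xs" using Cons y by auto
    then have nx: "worst xs W \<noteq> x" using Cons.prems(1) by auto
    show ?thesis
    proof (cases "w = x")
      case True then show ?thesis using b IHy by (simp add: pos_Cons)
    next
      case False
      then have "w \<in> set xs" using Cons.prems by auto
      with Cons have IH: "pos xs w \<le> pos xs (worst xs W)" by auto
      show ?thesis using IH IHy b nx False \<open>w \<in> set xs\<close> by (simp add: pos_Cons)
    qed
  next
    case False
    then have "w = x" using Cons.prems by auto
    moreover have "filter (\<lambda>x. x \<in> W) xs = []" using False by (simp add: filter_empty_conv)
    ultimately show ?thesis using Cons.prems by (simp add: worst_def pos_Cons)
  qed
qed

theorem lemma7: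
  fixes V :: "'v set" and A :: "'a set" and F :: "('v \<Rightarrow> 'a list) \<Rightarrow> 'a set"
  assumes "finite V" and "V \<noteq> {}" and "finite A"
    and "committee_rule V A F" and "SPO V A F" and "SPP V A F"
    and "profile V A P" and "i \<in> V"
    and "best (P i) (F P) \<noteq> worst (P i) (F P)"
    and "s \<in> A" and "s \<noteq> best (P i) (F P)" and "s \<noteq> worst (P i) (F P)"
  shows "best (swap_up (P i) s) (F (P(i := swap_up (P i) s))) \<in> {best (P i) (F P), s}
       \<and> worst (swap_up (P i) s) (F (P(i := swap_up (P i) s))) \<in> {worst (P i) (F P), s}"
proof -
  define xs where "xs = P i"
  define k where "k = pos xs s"
  define ys where "ys = swap_up xs s"
  have linx: "lin_order A xs" using assms(7,8) unfolding profile_def xs_def by auto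
  then have dx: "distinct xs" and sx: "set xs = A" by (auto simp: lin_order_def)
  have kl: "k < length xs" and xk: "xs ! k = s" using pos_in[of s xs] assms(10) sx k_def by auto
  show ?thesis
  proof (cases "k = 0")
    case True
    then have "ys = xs" unfolding ys_def swap_up_def k_def by (simp add: Let_def)
    then have "P(i := swap_up (P i) s) = P" using ys_def xs_def by simp
    then show ?thesis using \<open>ys = xs\<close> ys_def xs_def by simp
  next
    case False
    define u where "u = xs ! (k - 1)"
    have ysd: "ys = xs[k - 1 := xs ! k, k := xs ! (k - 1)]"
      unfolding ys_def swap_up_def k_def[symmetric] using False kl xk by (simp add: Let_def)
    have dy: "distinct ys" using ysd dx kl by (simp add: distinct_swap)
    have sy: "set ys = A" using ysd sx kl by (simp add: set_swap)
    have liny: "lin_order A ys" using dy sy by (simp add: lin_order_def)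
    have lenys: "length ys = length xs" using ysd by simp
    have uA: "u \<in> A" using sx kl u_def by auto
    have us: "u \<noteq> s"
    proof
      assume "u = s"
      then have "xs ! (k-1) = xs ! k" using xk u_def by simp
      then show False using dx kl False by (simp add: nth_eq_iff_index_eq)
    qed
    have pu: "pos xs u = k - 1" using pos_nth[OF dx, of "k-1"] kl u_def by simp
    have ps: "pos xs s = k" using k_def by simp
    have qs: "pos ys s = k - 1"
    proof -
      have "ys ! (k-1) = s" using ysd kl False xk by (simp add: nth_list_update)
      then show ?thesis using pos_nth[OF dy, of "k-1"] kl lenys by simp
    qed
    have qu: "pos ys u = k"
    proof -
      have "ys ! k = u" using ysd kl u_def by (simp add: nth_list_update)
      then show ?thesis using pos_nth[OF dy, of "k"] kl lenys by simp
    qed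
    have qo: "pos ys x = pos xs x" if "x \<in> A" "x \<noteq> s" "x \<noteq> u" for x
    proof -
      have px: "pos xs x < length xs" "xs ! pos xs x = x" using pos_in[of x xs] that sx by auto
      have "pos xs x \<noteq> k" using px xk that by auto
      moreover have "pos xs x \<noteq> k - 1" using px u_def that by auto
      ultimately have "ys ! pos xs x = x" using ysd px by (simp add: nth_list_update)
      then show ?thesis using pos_nth[OF dy, of "pos xs x"] px lenys by simp
    qed
    have injx: "x = y" if "x \<in> A" "y \<in> A" "pos xs x = pos xs y" for x y
      using pos_inj[of x xs y] that sx by auto
    have injy: "x = y" if "x \<in> A" "y \<in> A" "pos ys x = pos ys y" for x y
      using pos_inj[of x ys y] that sy by auto
    define P' where "P' = P(i := ys)"
    have prof': "profile V A P'" using assms(7) liny unfolding profile_def P'_def by auto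
    have backP: "P'(i := xs) = P" unfolding P'_def xs_def by simp
    have P'i: "P' i = ys" unfolding P'_def by simp
    define W where "W = F P"
    define W' where "W' = F P'"
    have W: "W \<noteq> {}" "W \<subseteq> A" using assms(4,7) unfolding committee_rule_def W_def by auto
    have W': "W' \<noteq> {}" "W' \<subseteq> A" using assms(4) prof' unfolding committee_rule_def W'_def by auto
    define t where "t = best xs W"
    define b where "b = worst xs W"
    define t' where "t' = best ys W'"
    define b' where "b' = worst ys W'"
    have S1: "pos xs t \<le> pos xs (best xs W')"
      using assms(5,7,8) liny unfolding SPO_def weak_pref_def t_def xs_def W_def W'_def P'_def by blast
    have S2: "pos ys t' \<le> pos ys (best ys W)"
      using assms(5) prof' assms(8) linx unfolding SPO_def weak_pref_def t'_def W_def W'_def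
      by (metis P'i backP)
    have R1: "pos xs b \<le> pos xs (worst xs W')"
      using assms(6,7,8) liny unfolding SPP_def weak_pref_def b_def xs_def W_def W'_def P'_def by blast
    have R2: "pos ys b' \<le> pos ys (worst ys W)"
      using assms(6) prof' assms(8) linx unfolding SPP_def weak_pref_def b'_def W_def W'_def
      by (metis P'i backP)
    obtain w where w: "w \<in> W" using W by auto
    obtain w' where w': "w' \<in> W'" using W' by auto
    have wA: "w \<in> A" "w' \<in> A" using w w' W W' by auto
    have tW: "t \<in> W" and bW: "b \<in> W" using best_prop[OF dx, of w W] worst_prop[OF dx, of w W] w wA sx
      t_def b_def by auto
    have t'W: "t' \<in> W'" and b'W: "b' \<in> W'" using best_prop[OF dy, of w' W'] worst_prop[OF dy, of w' W'] w' wA sy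
      t'_def b'_def by auto
    have tA: "t \<in> A" "b \<in> A" "t' \<in> A" "b' \<in> A" using tW bW t'W b'W W W' by auto
    have ts: "t \<noteq> s" "b \<noteq> s" using assms(11,12) t_def b_def xs_def W_def by auto
    have goal1: "t' \<in> {t, s}"
    proof (rule ccontr)
      assume "t' \<notin> {t, s}"
      then have n: "t' \<noteq> t" "t' \<noteq> s" by auto
      have bb: "best ys W \<in> W" "pos ys (best ys W) \<le> pos ys t"
        using best_prop[OF dy, of t W] tW tA sy by auto
      have "pos ys t' \<le> pos ys t" using S2 bb by simp
      then have lt: "pos ys t' < pos ys t" using injy[of t' t] n tA by force
      have ltx: "pos xs t' < pos xs t"
      proof (cases "t' = u")
        case True
        then have "t \<noteq> u" using n by simp
        then show ?thesis using lt qo[of t] tA ts True qu pu by auto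
      next
        case f: False
        show ?thesis
        proof (cases "t = u")
          case True
          have "pos xs t' \<noteq> k - 1" using injx[of t' u] uA tA f pu by auto
          then show ?thesis using lt qo[of t'] tA n f True qu pu by auto
        next
          case False
          then show ?thesis using lt qo[of t'] qo[of t] tA n f ts by auto
        qed
      qed
      have "pos xs (best xs W') \<le> pos xs t'" using best_prop[OF dx, of t' W'] t'W tA sx by auto
      then show False using S1 ltx by simp
    qed
    have goal2: "b' \<in> {b, s}"
    proof (rule ccontr)
      assume "b' \<notin> {b, s}"
      then have n: "b' \<noteq> b" "b' \<noteq> s" by auto
      define c where "c = worst xs W'"
      have cW: "c \<in> W'" "pos xs b' \<le> pos xs c" using worst_prop[OF dx, of b' W'] b'W tA sx c_def by auto
      have cA: "c \<in> A" using cW W' by auto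
      have bwy: "worst ys W = b"
      proof -
        define d where "d = worst ys W"
        have d: "d \<in> W" "pos ys b \<le> pos ys d" using worst_prop[OF dy, of b W] bW tA sy d_def by auto
        have dA: "d \<in> A" using d W by auto
        have dx': "pos xs d \<le> pos xs b" using worst_prop[OF dx, of d W] d dA sx b_def by auto
        show ?thesis
        proof (rule ccontr)
          assume "worst ys W \<noteq> b"
          then have db: "d \<noteq> b" using d_def by simp
          have l1: "pos ys b < pos ys d" using d injy[of b d] dA tA db by force
          have l2: "pos xs d < pos xs b" using dx' injx[of d b] dA tA db by force
          show False
          proof (cases "b = u")
            case True
            have "d \<noteq> u" using db True by simp
            then show ?thesis using l1 l2 True qu pu qs ps qo[of d] dA by (cases "d = s") auto
          next
            case False
            then show ?thesis using l1 l2 qo[of b] tA ts qu pu qs ps qo[of d] dA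
              by (cases "d = s"; cases "d = u") auto
          qed
        qed
      qed
      have "pos ys b' \<le> pos ys b" using R2 bwy by simp
      then have lt: "pos ys b' < pos ys b" using injy[of b' b] n tA by force
      have cwy: "pos ys c \<le> pos ys b'" using worst_prop[OF dy, of c W'] cW cA sy b'_def by auto
      have cb: "pos xs b \<le> pos xs c" using R1 c_def by simp
      show False
      proof (cases "b' = u")
        case True
        then show ?thesis using lt qo[of b] tA ts qu pu cb cwy qo[of c] cA qs ps injx[of c s] assms(10)
          by (cases "c = s"; cases "c = u"; cases "b = u") auto
      next
        case f: False
        then show ?thesis using lt qo[of b] qo[of b'] tA ts n qu pu cb cwy qo[of c] cA qs ps cW injx[of b' u] injx[of b s] injx[of c b'] uA assms(10)
          by (cases "c = s"; cases "c = u"; cases "b = u") auto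
      qed
    qed
    show ?thesis using goal1 goal2 unfolding t'_def b'_def t_def b_def W_def W'_def P'_def ys_def xs_def
      by simp
  qed
qed

end
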